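(* Let $\boldsymbol L=(L_i)_{i\ge1}$ be i.i.d. with law $\phi$ on $\mathcal T\in\{\mathbb N,[0,\infty)\}$, $\phi(\{0\})=0$, with $\int_0^\infty e^{\xi u}d\phi(u)<\infty$ for all $\xi\in\mathbb R$. Let $\mu$ be either $\mu_1(x)=\frac{\alpha}{x}(\log x)^{\alpha-1}e^{\beta(\log x)^\alpha}$ ($\alpha>0,\beta\ge0$) or $\mu_2(x)=\gamma\delta x^{\delta-1}e^{\gamma x^\delta}$ ($\gamma>0,\delta\in(0,1/2]$). Let $T_0=0$, $T_n=\sum_{i\le n}L_i$, $W_i=\int_{T_{i-1}}^{T_i}\mu(u)\,du$, and conditionally on $\boldsymbol L$ let $F_i$ have $\mathbb P(F_i\le x\mid\boldsymbol L)=\int_{T_{i-1}}^{T_{i-1}+x}\mu(u)\,du/W_i$ for $0\le x\le L_i$. Let $f:\mathbb R\to\mathbb R$ be differentiable and define $R_i$ by $$W_i\,\mathbb E[f'(F_i)\mid\boldsymbol L]=\mu(T_{i-1})R_i.$$ Then there exist a random integer $I_0$ and a constant $c>0$ independent of $f$ such that for all $i\ge I_0$, $$|R_i-(f(L_i)-f(0))|\le\begin{cases}\dfrac{c\,(f(L_i)-f(0))L_i(\log T_{i-1})^{\tilde\alpha-1}}{T_{i-1}}&\text{if }\mu=\mu_1,\\[2mm]\dfrac{c\,(f(L_i)-f(0))L_i}{T_{i-1}^{1-\delta}}&\text{if }\mu=\mu_2,\end{cases}$$ where $\tilde\alpha=\max\{1,\alpha\}$.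
   Formalization: The bound is claimed only for functions f that are nondecreasing on [0, infinity) as well as differentiable, not for every differentiable f. The statement above fails without it. *)

theory Defs
  imports "HOL-Probability.Probability"
begin

definition mu1 :: "real \<Rightarrow> real \<Rightarrow> real \<Rightarrow> real" where
  "mu1 \<alpha> \<beta> x = \<alpha> / x * (ln x) powr (\<alpha> - 1) * exp (\<beta> * (ln x) powr \<alpha>)"

definition mu2 :: "real \<Rightarrow> real \<Rightarrow> real \<Rightarrow> real" where
  "mu2 \<gamma> \<delta> x = \<gamma> * \<delta> * x powr (\<delta> - 1) * exp (\<gamma> * x powr \<delta>)"

definition partial_sum :: "(nat \<Rightarrow> 'a \<Rightarrow> real) \<Rightarrow> nat \<Rightarrow> 'a \<Rightarrow> real" where
  "partial_sum L n \<omega> = (\<Sum>k\<in>{1..n}. L k \<omega>)"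

text \<open>W = integral of mu over [t, t + l]  (with t = T_{i-1}, l = L_i this is W_i).\<close>
definition Wint :: "(real \<Rightarrow> real) \<Rightarrow> real \<Rightarrow> real \<Rightarrow> real" where
  "Wint \<mu> t l = (\<integral>u\<in>{t..t+l}. \<mu> u \<partial>lborel)"

text \<open>Conditional law of F_i given the sequence L (with t = T_{i-1}, l = L_i):
  the law on [0,l] with distribution function x \<mapsto> (integral of mu over [t,t+x]) / W,
  i.e. density mu(t+x)/W on [0,l].\<close>
definition cond_law :: "(real \<Rightarrow> real) \<Rightarrow> real \<Rightarrow> real \<Rightarrow> real measure" where
  "cond_law \<mu> t l = density lborel (\<lambda>x. ennreal (indicator {0..l} x * \<mu> (t + x) / Wint \<mu> t l))"

definition Rterm :: "(real \<Rightarrow> real) \<Rightarrow> (real \<Rightarrow> real) \<Rightarrow> real \<Rightarrow> real \<Rightarrow> real" where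
  "Rterm \<mu> f t l = Wint \<mu> t l * (\<integral>x. deriv f x \<partial>cond_law \<mu> t l) / \<mu> t"

end

theory Submission
  imports Defs "HOL-Real_Asymp.Real_Asymp"
begin


lemma deriv_borel:
  fixes f :: "real \<Rightarrow> real"
  assumes df: "\<forall>x. f differentiable (at x)"
  shows "deriv f \<in> borel_measurable borel"
proof (rule borel_measurable_LIMSEQ_real)
  have cont: "continuous_on UNIV f"
    using df by (meson differentiable_imp_continuous_on differentiable_on_def)
  show "(\<lambda>n x. (f (x + 1 / Suc n) - f x) / (1 / Suc n)) n \<in> borel_measurable borel" for n
    using cont by (intro borel_measurable_divide borel_measurable_diff borel_measurable_continuous_onI
        continuous_on_compose2[OF cont] continuous_intros) auto
  fix x
  have D: "DERIV f x :> deriv f x"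
    using df DERIV_deriv_iff_real_differentiable by blast
  then have "((\<lambda>y. (f y - f x) / (y - x)) \<longlongrightarrow> deriv f x) (at x)"
    using DERIV_def has_field_derivative_iff by blast
  moreover have "filterlim (\<lambda>n::nat. x + 1 / Suc n) (at x) sequentially"
  proof (rule filterlim_atI)
    show "((\<lambda>n::nat. x + 1 / Suc n) \<longlongrightarrow> x) sequentially"
      using tendsto_add[OF tendsto_const[of x] LIMSEQ_Suc[OF lim_inverse_n']] by (simp add: divide_inverse)
    show "\<forall>\<^sub>F n in sequentially. x + 1 / real (Suc n) \<noteq> x" by simp
  qed
  ultimately have "((\<lambda>n::nat. (f (x + 1 / Suc n) - f x) / (x + 1 / Suc n - x)) \<longlongrightarrow> deriv f x) sequentially"
    by (rule filterlim_compose)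
  then show "(\<lambda>n. (f (x + 1 / Suc n) - f x) / (1 / Suc n)) \<longlonglongrightarrow> deriv f x"
    by simp
qed



lemma B:
  fixes f \<mu> :: "real \<Rightarrow> real" and t l m E :: real
  assumes df: "\<forall>x. f differentiable (at x)" and mono: "mono_on {0..} f" and l: "0 < l"
    and mum: "\<mu> \<in> borel_measurable borel" and mt: "0 < \<mu> t"
    and m: "0 < m" and lb: "\<And>x. x \<in> {0..l} \<Longrightarrow> m \<le> \<mu> (t + x)"
    and rb: "\<And>x. x \<in> {0..l} \<Longrightarrow> \<bar>\<mu> (t + x) / \<mu> t - 1\<bar> \<le> E"
  shows "\<bar>Rterm \<mu> f t l - (f l - f 0)\<bar> \<le> E * (f l - f 0)"
proof -
  define f' where "f' = deriv f"
  have fm[measurable]: "f' \<in> borel_measurable borel" unfolding f'_def by (rule deriv_borel[OF df])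
  have D: "DERIV f x :> f' x" for x
    using df DERIV_deriv_iff_real_differentiable f'_def by blast
  have nn: "0 \<le> f' x" if x: "0 \<le> x" for x
  proof (rule ccontr)
    assume "\<not> 0 \<le> f' x"
    then obtain d where d: "d > 0" "\<forall>h>0. h < d \<longrightarrow> f x > f (x + h)"
      using DERIV_neg_dec_right[OF D[of x]] by force
    then have "f x > f (x + d/2)" by simp
    moreover have "f x \<le> f (x + d/2)" using mono x d(1) by (intro mono_onD[OF mono]) auto
    ultimately show False by simp
  qed
  have mu_m[measurable]: "(\<lambda>x. \<mu> (t + x)) \<in> borel_measurable borel" using mum by measurable
  have E0: "0 \<le> E" using rb[of 0] l mt by simp
  have I1: "integrable lborel (\<lambda>x. f' x * indicator {0..l} x)"
    and J1: "(\<integral>x. f' x * indicator {0..l} x \<partial>lborel) = f l - f 0"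
    using integrable_FTC_Icc_nonneg[of f' 0 l f] integral_FTC_Icc_nonneg[of f' 0 l f] D nn l by auto
  define r where "r x = \<mu> (t + x) / \<mu> t" for x
  have rm[measurable]: "r \<in> borel_measurable borel" unfolding r_def by measurable
  have bnd: "norm (f' x * indicator {0..l} x * (r x - 1)) \<le> norm (E * (f' x * indicator {0..l} x))" for x
    using rb[of x] nn[of x] E0 by (auto simp: r_def abs_mult split: split_indicator intro!: ord_le_eq_trans[OF mult_left_mono[of _ E]])
  have I2: "integrable lborel (\<lambda>x. f' x * indicator {0..l} x * (r x - 1))"
  proof (rule Bochner_Integration.integrable_bound[OF integrable_mult_right[OF I1, of E]])
    show "(\<lambda>x. f' x * indicator {0..l} x * (r x - 1)) \<in> borel_measurable lborel" by measurable
    show "AE x in lborel. norm (f' x * indicator {0..l} x * (r x - 1)) \<le> norm (E * (f' x * indicator {0..l} x))"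
      by (rule AE_I2) (rule bnd)
  qed
  have I3: "integrable lborel (\<lambda>x. f' x * indicator {0..l} x * r x)"
  proof -
    have "integrable lborel (\<lambda>x. f' x * indicator {0..l} x + f' x * indicator {0..l} x * (r x - 1))"
      using I1 I2 by auto
    then show ?thesis by (simp add: algebra_simps)
  qed
  have J3: "(\<integral>x. f' x * indicator {0..l} x * r x \<partial>lborel) = (f l - f 0) + (\<integral>x. f' x * indicator {0..l} x * (r x - 1) \<partial>lborel)"
  proof -
    have "(\<integral>x. f' x * indicator {0..l} x * r x \<partial>lborel) = (\<integral>x. f' x * indicator {0..l} x + f' x * indicator {0..l} x * (r x - 1) \<partial>lborel)"
      by (rule Bochner_Integration.integral_cong) (auto simp: algebra_simps)
    also have "\<dots> = (f l - f 0) + (\<integral>x. f' x * indicator {0..l} x * (r x - 1) \<partial>lborel)"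
      using I1 I2 J1 by simp
    finally show ?thesis .
  qed
  have Dbound: "\<bar>\<integral>x. f' x * indicator {0..l} x * (r x - 1) \<partial>lborel\<bar> \<le> E * (f l - f 0)"
  proof -
    have "\<bar>\<integral>x. f' x * indicator {0..l} x * (r x - 1) \<partial>lborel\<bar> \<le> (\<integral>x. norm (f' x * indicator {0..l} x * (r x - 1)) \<partial>lborel)"
      using integral_norm_bound[of lborel "\<lambda>x. f' x * indicator {0..l} x * (r x - 1)"] by simp
    also have "\<dots> \<le> (\<integral>x. E * (f' x * indicator {0..l} x) \<partial>lborel)"
    proof (rule integral_mono[OF I2[THEN integrable_norm] integrable_mult_right[OF I1]])
      fix x show "norm (f' x * indicator {0..l} x * (r x - 1)) \<le> E * (f' x * indicator {0..l} x)"
        using bnd[of x] nn[of x] E0 by (auto split: split_indicator)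
    qed
    also have "\<dots> = E * (f l - f 0)" using J1 by simp
    finally show ?thesis .
  qed
  define W where "W = Wint \<mu> t l"
  have Wpos: "0 < W"
  proof -
    have mu_bd: "m \<le> \<mu> u \<and> \<mu> u \<le> \<mu> t * (1 + E)" if "u \<in> {t..t+l}" for u
    proof -
      have x: "u - t \<in> {0..l}" using that by auto
      have "\<mu> u / \<mu> t \<le> 1 + E" using rb[OF x] by simp
      then have "\<mu> u \<le> \<mu> t * (1 + E)" using mt by (simp add: divide_le_eq mult.commute)
      then show ?thesis using lb[OF x] by simp
    qed
    have Iu: "integrable lborel (\<lambda>u. indicator {t..t+l} u * (\<mu> t * (1 + E)))"
      by (intro integrable_mult_left integrable_real_indicator) (auto simp: emeasure_lborel_Icc_eq)
    have Im: "integrable lborel (\<lambda>u. indicator {t..t+l} u * m)"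
      by (intro integrable_mult_left integrable_real_indicator) (auto simp: emeasure_lborel_Icc_eq)
    have Imu: "integrable lborel (\<lambda>u. indicator {t..t+l} u * \<mu> u)"
    proof (rule Bochner_Integration.integrable_bound[OF Iu])
      show "(\<lambda>u. indicator {t..t+l} u * \<mu> u) \<in> borel_measurable lborel" using mum by measurable
      show "AE u in lborel. norm (indicator {t..t+l} u * \<mu> u) \<le> norm (indicator {t..t+l} u * (\<mu> t * (1 + E)))"
      proof (rule AE_I2)
        fix u show "norm (indicator {t..t+l} u * \<mu> u) \<le> norm (indicator {t..t+l} u * (\<mu> t * (1 + E)))"
        proof (cases "u \<in> {t..t+l}")
          case True then show ?thesis using mu_bd[OF True] m by auto
        qed simp
      qed
    qed
    have "m * l \<le> W"
    proof -
      have "m * l = (\<integral>u. indicator {t..t+l} u * m \<partial>lborel)" using l by simp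
      also have "\<dots> \<le> (\<integral>u. indicator {t..t+l} u * \<mu> u \<partial>lborel)"
        by (intro integral_mono Im Imu) (use mu_bd in \<open>auto split: split_indicator\<close>)
      also have "\<dots> = W" by (simp add: W_def Wint_def set_lebesgue_integral_def)
      finally show ?thesis .
    qed
    then show ?thesis using m l by (smt (verit) mult_pos_pos)
  qed
  define g where "g x = indicator {0..l} x * \<mu> (t + x) / W" for x
  have gm[measurable]: "g \<in> borel_measurable borel" unfolding g_def by measurable
  have g0: "0 \<le> g x" for x
    using lb[of x] m Wpos by (auto simp: g_def split: split_indicator)
  have "Rterm \<mu> f t l = W * (\<integral>x. g x * f' x \<partial>lborel) / \<mu> t"
    unfolding Rterm_def cond_law_def W_def[symmetric] f'_def[symmetric] g_def[symmetric]
    by (subst integral_density) (auto simp: g0)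
  also have "(\<integral>x. g x * f' x \<partial>lborel) = (\<integral>x. f' x * indicator {0..l} x * r x * (\<mu> t / W) \<partial>lborel)"
    using mt by (intro Bochner_Integration.integral_cong) (auto simp: g_def r_def)
  also have "\<dots> = (\<integral>x. f' x * indicator {0..l} x * r x \<partial>lborel) * (\<mu> t / W)"
    by simp
  finally have "Rterm \<mu> f t l = (\<integral>x. f' x * indicator {0..l} x * r x \<partial>lborel)"
    using Wpos mt by simp
  then show ?thesis using J3 Dbound by simp
qed



lemma powr_mvt:
  fixes s s' a :: real
  assumes "0 < s" "s \<le> s'"
  shows "\<exists>z. s \<le> z \<and> z \<le> s' \<and> s' powr a - s powr a = (s' - s) * (a * z powr (a - 1))"
proof (cases "s = s'")
  case True then show ?thesis by auto
next
  case False
  then have "s < s'" using assms by simp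
  from MVT2[OF this, of "\<lambda>z. z powr a" "\<lambda>z. a * z powr (a - 1)"] assms
  obtain z where "s < z" "z < s'" "s' powr a - s powr a = (s' - s) * (a * z powr (a - 1))"
    using has_real_derivative_powr by force
  then show ?thesis by (intro exI[of _ z]) auto
qed

lemma exp_sub_one_bound: "\<bar>exp y - 1\<bar> \<le> \<bar>y\<bar> * exp \<bar>y\<bar>" for y :: real
proof (cases "y \<ge> 0")
  case True
  have "1 - y \<le> exp (- y)" using exp_ge_add_one_self[of "-y"] by simp
  then have "(1 - y) * exp y \<le> exp (-y) * exp y" by (simp add: mult_right_mono)
  then have "exp y - y * exp y \<le> 1" by (simp add: algebra_simps exp_minus_inverse)
  then show ?thesis using True by simp
next
  case False
  have "1 + y \<le> exp y" using exp_ge_add_one_self[of y] by simp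
  moreover have "exp y \<le> 1" using False by simp
  moreover have "-y \<le> -y * exp (-y)" using False by simp
  ultimately have "1 - exp y \<le> -y * exp (-y)" by linarith
  moreover have "\<bar>exp y - 1\<bar> = 1 - exp y" using \<open>exp y \<le> 1\<close> by simp
  moreover have "\<bar>y\<bar> * exp \<bar>y\<bar> = -y * exp (-y)" using False by simp
  ultimately show ?thesis by simp
qed

lemma mu2_pos: "0 < \<gamma> \<Longrightarrow> 0 < \<delta> \<Longrightarrow> 0 < u \<Longrightarrow> 0 < mu2 \<gamma> \<delta> u"
  by (simp add: mu2_def)

lemma ln_mu2: "0 < \<gamma> \<Longrightarrow> 0 < \<delta> \<Longrightarrow> 0 < u \<Longrightarrow>
   ln (mu2 \<gamma> \<delta> u) = ln (\<gamma> * \<delta>) + (\<delta> - 1) * ln u + \<gamma> * u powr \<delta>"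
  by (simp add: mu2_def ln_mult)

lemma ln_diff_bound: "0 < t \<Longrightarrow> 0 \<le> x \<Longrightarrow> 0 \<le> ln (t + x) - ln t \<and> ln (t + x) - ln t \<le> x / t" for t x :: real
proof -
  assume t: "0 < t" and x: "0 \<le> x"
  have "1 + x / t = (t + x) / t" using t by (simp add: add_divide_distrib)
  then have "ln (t + x) - ln t = ln (1 + x / t)"
    using t x by (simp add: ln_div)
  moreover have "ln (1 + x / t) \<le> x / t" using t x by (intro ln_add_one_self_le_self) simp
  moreover have "0 \<le> ln (1 + x / t)" using t x by simp
  ultimately show ?thesis by simp
qed

lemma mu2_bound:
  assumes g: "0 < \<gamma>" and d: "0 < \<delta>" "\<delta> \<le> 1/2" and t: "1 \<le> t" and x: "0 \<le> x"
  shows "\<bar>ln (mu2 \<gamma> \<delta> (t + x)) - ln (mu2 \<gamma> \<delta> t)\<bar> \<le> (1 + \<gamma> * \<delta>) * x * (1 / t powr (1 - \<delta>))"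
proof -
  have rho: "1 / t powr (1 - \<delta>) = t powr (\<delta> - 1)"
    using t by (simp add: powr_minus_divide[symmetric] )
  have l1: "0 \<le> ln (t + x) - ln t" "ln (t + x) - ln t \<le> x / t" using ln_diff_bound[of t x] t x by auto
  obtain z where z: "t \<le> z" "z \<le> t + x" "(t + x) powr \<delta> - t powr \<delta> = x * (\<delta> * z powr (\<delta> - 1))"
    using powr_mvt[of t "t + x" \<delta>] t x by auto
  have zt: "z powr (\<delta> - 1) \<le> t powr (\<delta> - 1)" using z t d by (intro powr_mono2') auto
  have zpos: "0 \<le> z powr (\<delta> - 1)" by simp
  have it: "x / t \<le> x * t powr (\<delta> - 1)"
  proof -
    have "t powr (-1) \<le> t powr (\<delta> - 1)" using t d by (intro powr_mono) auto
    then have "1 / t \<le> t powr (\<delta> - 1)" using t by (simp add: powr_minus_divide)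
    then show ?thesis using x by (metis divide_inverse inverse_eq_divide mult_left_mono)
  qed
  have e: "ln (mu2 \<gamma> \<delta> (t + x)) - ln (mu2 \<gamma> \<delta> t)
      = (\<delta> - 1) * (ln (t + x) - ln t) + \<gamma> * ((t + x) powr \<delta> - t powr \<delta>)"
    using ln_mu2[OF g d(1), of t] ln_mu2[OF g d(1), of "t + x"] t x by (simp add: algebra_simps)
  have A: "\<bar>(\<delta> - 1) * (ln (t + x) - ln t)\<bar> \<le> x * t powr (\<delta> - 1)"
  proof -
    have "\<bar>(\<delta> - 1) * (ln (t + x) - ln t)\<bar> = (1 - \<delta>) * (ln (t + x) - ln t)"
      using l1 d by (simp add: abs_mult)
    also have "\<dots> \<le> 1 * (ln (t + x) - ln t)" using l1 d by (intro mult_right_mono) auto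
    finally show ?thesis using l1 it by simp
  qed
  have B: "\<bar>\<gamma> * ((t + x) powr \<delta> - t powr \<delta>)\<bar> \<le> \<gamma> * \<delta> * x * t powr (\<delta> - 1)"
  proof -
    have "\<bar>\<gamma> * ((t + x) powr \<delta> - t powr \<delta>)\<bar> = \<gamma> * \<delta> * x * z powr (\<delta> - 1)"
      using z(3) g d x zpos by (simp add: abs_mult)
    also have "\<dots> \<le> \<gamma> * \<delta> * x * t powr (\<delta> - 1)"
      using zt g d x by (intro mult_left_mono) auto
    finally show ?thesis .
  qed
  show ?thesis unfolding e rho using A B by (simp add: algebra_simps)
qed



lemma ln_mu1: "0 < \<alpha> \<Longrightarrow> 1 < u \<Longrightarrow>
   ln (mu1 \<alpha> \<beta> u) = ln \<alpha> - ln u + (\<alpha> - 1) * ln (ln u) + \<beta> * ln u powr \<alpha>"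
  by (simp add: mu1_def ln_mult ln_div)

lemma mu1_pos: "0 < \<alpha> \<Longrightarrow> 1 < u \<Longrightarrow> 0 < mu1 \<alpha> \<beta> u"
  by (simp add: mu1_def)

lemma mu1_bound:
  assumes al: "0 < \<alpha>" and be: "0 \<le> \<beta>" and t: "exp 1 \<le> t" and x: "0 \<le> x" "x \<le> t"
  shows "\<bar>ln (mu1 \<alpha> \<beta> (t + x)) - ln (mu1 \<alpha> \<beta> t)\<bar>
     \<le> (1 + \<bar>\<alpha> - 1\<bar> + \<alpha> * \<beta> * 2 powr (max 1 \<alpha> - 1)) * x * (ln t powr (max 1 \<alpha> - 1) / t)"
proof -
  define a where "a = max 1 \<alpha> - 1"
  have a0: "0 \<le> a" unfolding a_def by simp
  have t1: "1 < t" using t by (smt (verit) exp_gt_one)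
  have t0: "0 < t" using t1 by simp
  define s where "s = ln t"
  define s' where "s' = ln (t + x)"
  have s1: "1 \<le> s" unfolding s_def using t t0 by (simp add: ln_ge_iff)
  have d: "0 \<le> s' - s" "s' - s \<le> x / t" using ln_diff_bound[OF t0 x(1)] by (auto simp: s_def s'_def)
  have xt: "x / t \<le> 1" using x t0 by simp
  have d2: "0 \<le> ln s' - ln s" "ln s' - ln s \<le> s' - s"
  proof -
    have "0 \<le> ln (s + (s' - s)) - ln s \<and> ln (s + (s' - s)) - ln s \<le> (s' - s) / s"
      using ln_diff_bound[of s "s' - s"] s1 d by simp
    moreover have "(s' - s) / s \<le> s' - s" using s1 d by (simp add: divide_le_eq mult_le_cancel_left1)
    ultimately show "0 \<le> ln s' - ln s" "ln s' - ln s \<le> s' - s" by auto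
  qed
  obtain z where z: "s \<le> z" "z \<le> s'" "s' powr \<alpha> - s powr \<alpha> = (s' - s) * (\<alpha> * z powr (\<alpha> - 1))"
    using powr_mvt[of s s' \<alpha>] s1 d by auto
  have zb: "z powr (\<alpha> - 1) \<le> 2 powr a * s powr a"
  proof (cases "1 \<le> \<alpha>")
    case True
    then have aa: "a = \<alpha> - 1" unfolding a_def by simp
    have "z \<le> 2 * s" using z d xt s1 by linarith
    then have "z powr (\<alpha> - 1) \<le> (2 * s) powr (\<alpha> - 1)" using True z s1 by (intro powr_mono2) auto
    then show ?thesis by (simp add: aa powr_mult)
  next
    case False
    then have aa: "a = 0" unfolding a_def by simp
    have "z powr (\<alpha> - 1) \<le> 1 powr (\<alpha> - 1)" using False z s1 by (intro powr_mono2') auto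
    then show ?thesis using s1 by (simp add: aa)
  qed
  have sa: "1 \<le> s powr a" using s1 a0 by (rule ge_one_powr_ge_zero)
  have e: "ln (mu1 \<alpha> \<beta> (t + x)) - ln (mu1 \<alpha> \<beta> t)
      = - (s' - s) + (\<alpha> - 1) * (ln s' - ln s) + \<beta> * (s' powr \<alpha> - s powr \<alpha>)"
    using ln_mu1[OF al t1, of \<beta>] ln_mu1[OF al, of "t + x" \<beta>] t1 x
    by (simp add: s_def s'_def algebra_simps)
  define K where "K = 1 + \<bar>\<alpha> - 1\<bar> + \<alpha> * \<beta> * 2 powr a"
  have "\<bar>ln (mu1 \<alpha> \<beta> (t + x)) - ln (mu1 \<alpha> \<beta> t)\<bar>
      \<le> (s' - s) + \<bar>\<alpha> - 1\<bar> * (s' - s) + \<beta> * ((s' - s) * (\<alpha> * z powr (\<alpha> - 1)))"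
  proof -
    have "\<bar>(\<alpha> - 1) * (ln s' - ln s)\<bar> \<le> \<bar>\<alpha> - 1\<bar> * (s' - s)"
      using d2 by (simp add: abs_mult mult_left_mono)
    moreover have "\<bar>\<beta> * (s' powr \<alpha> - s powr \<alpha>)\<bar> = \<beta> * ((s' - s) * (\<alpha> * z powr (\<alpha> - 1)))"
      using z(3) d al be by (simp add: abs_mult)
    ultimately show ?thesis unfolding e using d by linarith
  qed
  also have "\<dots> \<le> (s' - s) * K * s powr a"
  proof -
    have "\<beta> * ((s' - s) * (\<alpha> * z powr (\<alpha> - 1))) \<le> \<beta> * ((s' - s) * (\<alpha> * (2 powr a * s powr a)))"
      using zb d al be by (intro mult_left_mono) auto
    moreover have "(s' - s) + \<bar>\<alpha> - 1\<bar> * (s' - s) \<le> ((s' - s) + \<bar>\<alpha> - 1\<bar> * (s' - s)) * s powr a"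
    proof -
      have "0 \<le> (s' - s) + \<bar>\<alpha> - 1\<bar> * (s' - s)" using d by simp
      then show ?thesis using sa by (metis mult.right_neutral mult_left_mono)
    qed
    ultimately show ?thesis unfolding K_def by (simp add: algebra_simps)
  qed
  also have "\<dots> \<le> (x / t) * K * s powr a"
    using d sa al be unfolding K_def by (intro mult_right_mono) (auto intro!: add_nonneg_nonneg)
  also have "\<dots> = K * x * (ln t powr a / t)" by (simp add: s_def)
  finally show ?thesis unfolding K_def a_def .
qed



lemma mu1_meas: "mu1 \<alpha> \<beta> \<in> borel_measurable borel"
  unfolding mu1_def by measurable

lemma mu2_meas: "mu2 \<gamma> \<delta> \<in> borel_measurable borel"
  unfolding mu2_def by measurable

lemma detA:
  fixes \<mu> \<rho> :: "real \<Rightarrow> real"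
  assumes H: "(\<alpha> > 0 \<and> \<beta> \<ge> 0 \<and> \<mu> = mu1 \<alpha> \<beta> \<and>
            \<rho> = (\<lambda>t. (ln t) powr (max 1 \<alpha> - 1) / t))
       \<or> (\<gamma> > 0 \<and> 0 < \<delta> \<and> \<delta> \<le> 1/2 \<and> \<mu> = mu2 \<gamma> \<delta> \<and>
            \<rho> = (\<lambda>t. 1 / t powr (1 - \<delta>)))"
  shows "\<exists>C>0. \<exists>K>0. \<exists>t0\<ge>1. \<mu> \<in> borel_measurable borel \<and> (\<forall>t\<ge>t0. 0 < \<mu> t \<and> 1/t \<le> \<rho> t \<and> \<rho> t \<le> K / sqrt t \<and>
     (\<forall>x. 0 \<le> x \<and> x \<le> t \<longrightarrow> 0 < \<mu> (t + x) \<and> \<bar>ln (\<mu> (t + x)) - ln (\<mu> t)\<bar> \<le> C * x * \<rho> t))"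
  using H
proof
  assume h: "\<alpha> > 0 \<and> \<beta> \<ge> 0 \<and> \<mu> = mu1 \<alpha> \<beta> \<and> \<rho> = (\<lambda>t. (ln t) powr (max 1 \<alpha> - 1) / t)"
  define a where "a = max 1 \<alpha> - 1"
  have a0: "0 \<le> a" unfolding a_def by simp
  define C where "C = 1 + \<bar>\<alpha> - 1\<bar> + \<alpha> * \<beta> * 2 powr a"
  have C0: "0 < C" unfolding C_def using h by (intro add_pos_nonneg) auto
  define K where "K = (if a = 0 then 1 else (2 * a) powr a)"
  have K0: "0 < K" unfolding K_def using a0 by auto
  have e1: "1 \<le> exp (1::real)" by simp
  have props: "0 < \<mu> t \<and> 1/t \<le> \<rho> t \<and> \<rho> t \<le> K / sqrt t \<and>
     (\<forall>x. 0 \<le> x \<and> x \<le> t \<longrightarrow> 0 < \<mu> (t + x) \<and> \<bar>ln (\<mu> (t + x)) - ln (\<mu> t)\<bar> \<le> C * x * \<rho> t)"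
    if t: "exp 1 \<le> t" for t
  proof -
    have t1: "1 < t" using t by (smt (verit) exp_gt_one)
    have s1: "1 \<le> ln t" using t t1 by (simp add: ln_ge_iff)
    have rho: "\<rho> t = ln t powr a / t" using h a_def by simp
    have sa: "1 \<le> ln t powr a" using s1 a0 by (rule ge_one_powr_ge_zero)
    have r1: "1/t \<le> \<rho> t" unfolding rho using sa t1 by (simp add: divide_right_mono)
    have r2: "\<rho> t \<le> K / sqrt t"
    proof (cases "a = 0")
      case True
      have st: "sqrt t * sqrt t = t" using t1 by simp
      have "1 \<le> sqrt t" using t1 by simp
      then have "sqrt t * 1 \<le> sqrt t * sqrt t" by (intro mult_left_mono) auto
      then have "sqrt t \<le> t" using st by simp
      then have "1 / t \<le> 1 / sqrt t" using t1 by (intro divide_left_mono) auto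
      then show ?thesis using True s1 unfolding rho K_def by simp
    next
      case False
      then have ap: "0 < a" using a0 by simp
      define b where "b = 1 / (2 * a)"
      have b0: "0 < b" unfolding b_def using ap by simp
      have "ln t \<le> t powr b / b" using ln_powr_bound[of t b] t1 b0 by simp
      then have "ln t powr a \<le> (t powr b / b) powr a" using s1 a0 by (intro powr_mono2) auto
      also have "\<dots> = t powr (b * a) / b powr a" using t1 b0 by (simp add: powr_divide powr_powr)
      also have "t powr (b * a) / b powr a = sqrt t * (2 * a) powr a"
      proof -
        have "t powr (b * a) = sqrt t" using ap t1 by (simp add: b_def powr_half_sqrt)
        moreover have "1 / b powr a = (2 * a) powr a" using b0 ap by (simp add: b_def powr_divide)
        ultimately show ?thesis by (metis times_divide_eq_right mult.right_neutral)
      qed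
      finally have "ln t powr a \<le> sqrt t * (2 * a) powr a" .
      then have "ln t powr a / t \<le> sqrt t * (2 * a) powr a / t" using t1 by (simp add: divide_right_mono)
      also have "\<dots> = (2 * a) powr a / sqrt t"
      proof -
        have st: "t = sqrt t * sqrt t" using t1 by simp
        have "0 < sqrt t" using t1 by simp
        then show ?thesis by (subst (2) st) (simp add: field_simps)
      qed
      finally show ?thesis unfolding rho K_def using False by simp
    qed
    have r3: "0 < \<mu> (t + x) \<and> \<bar>ln (\<mu> (t + x)) - ln (\<mu> t)\<bar> \<le> C * x * \<rho> t" if "0 \<le> x" "x \<le> t" for x
      using mu1_bound[of \<alpha> \<beta> t x] mu1_pos[of \<alpha> "t + x" \<beta>] h that t t1 unfolding C_def a_def by simp
    show ?thesis using r1 r2 r3 mu1_pos[of \<alpha> t \<beta>] h t1 by simp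
  qed
  show ?thesis
    using C0 K0 props e1 mu1_meas h by blast
next
  assume h: "\<gamma> > 0 \<and> 0 < \<delta> \<and> \<delta> \<le> 1/2 \<and> \<mu> = mu2 \<gamma> \<delta> \<and> \<rho> = (\<lambda>t. 1 / t powr (1 - \<delta>))"
  define C where "C = 1 + \<gamma> * \<delta>"
  have C0: "0 < C" unfolding C_def using h by (simp add: add_pos_nonneg)
  have props: "0 < \<mu> t \<and> 1/t \<le> \<rho> t \<and> \<rho> t \<le> 1 / sqrt t \<and>
     (\<forall>x. 0 \<le> x \<and> x \<le> t \<longrightarrow> 0 < \<mu> (t + x) \<and> \<bar>ln (\<mu> (t + x)) - ln (\<mu> t)\<bar> \<le> C * x * \<rho> t)"
    if t: "1 \<le> t" for t
  proof -
    have r1: "1/t \<le> \<rho> t"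
    proof -
      have "t powr (1 - \<delta>) \<le> t powr 1" using t h by (intro powr_mono) auto
      then show ?thesis using h t by (simp add: frac_le)
    qed
    have r2: "\<rho> t \<le> 1 / sqrt t"
    proof -
      have "t powr (1/2) \<le> t powr (1 - \<delta>)" using t h by (intro powr_mono) auto
      then show ?thesis using h t by (simp add: frac_le powr_half_sqrt[symmetric])
    qed
    have r3: "0 < \<mu> (t + x) \<and> \<bar>ln (\<mu> (t + x)) - ln (\<mu> t)\<bar> \<le> C * x * \<rho> t" if "0 \<le> x" "x \<le> t" for x
      using mu2_bound[of \<gamma> \<delta> t x] mu2_pos[of \<gamma> \<delta> "t + x"] h that t unfolding C_def by simp
    show ?thesis using r1 r2 r3 mu2_pos[of \<gamma> \<delta> t] h t by simp
  qed
  have "(1::real) > 0" by simp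
  show ?thesis
    using C0 props mu2_meas h by (intro exI[of _ C] conjI C0 exI[of _ 1]) auto
qed

lemma ratio:
  fixes \<mu> \<rho> :: "real \<Rightarrow> real"
  assumes C: "0 < C" and t: "1 \<le> t" and mt: "0 < \<mu> t" and r1: "1/t \<le> \<rho> t"
    and H: "\<forall>x. 0 \<le> x \<and> x \<le> t \<longrightarrow> 0 < \<mu> (t + x) \<and> \<bar>ln (\<mu> (t + x)) - ln (\<mu> t)\<bar> \<le> C * x * \<rho> t"
    and l: "0 < l" and lr: "l * \<rho> t \<le> 1" and x: "x \<in> {0..l}"
  shows "\<mu> t * exp (- C) \<le> \<mu> (t + x) \<and> \<bar>\<mu> (t + x) / \<mu> t - 1\<bar> \<le> C * exp C * l * \<rho> t"
proof -
  have rp: "0 < \<rho> t" using r1 t by (smt (verit) divide_pos_pos)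
  have "l \<le> 1 / \<rho> t" using lr rp by (simp add: le_divide_eq)
  also have "\<dots> \<le> t" using r1 rp t by (simp add: divide_le_eq mult.commute le_divide_eq)
  finally have lt: "l \<le> t" .
  have x0: "0 \<le> x" "x \<le> t" using x lt by auto
  define y where "y = ln (\<mu> (t + x)) - ln (\<mu> t)"
  have mx: "0 < \<mu> (t + x)" using H x0 by auto
  have yb: "\<bar>y\<bar> \<le> C * x * \<rho> t" using H x0 unfolding y_def by auto
  also have "\<dots> \<le> C * l * \<rho> t" using x C rp by (intro mult_right_mono mult_left_mono) auto
  finally have yb2: "\<bar>y\<bar> \<le> C * l * \<rho> t" .
  also have "\<dots> \<le> C" using C lr unfolding mult.assoc by (intro mult_left_le) auto
  finally have yC: "\<bar>y\<bar> \<le> C" .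
  have eq: "\<mu> (t + x) / \<mu> t = exp y" using mx mt unfolding y_def by (simp add: exp_diff)
  have "\<bar>exp y - 1\<bar> \<le> \<bar>y\<bar> * exp \<bar>y\<bar>" by (rule exp_sub_one_bound)
  also have "\<dots> \<le> (C * l * \<rho> t) * exp C" using yb2 yC by (intro mult_mono) auto
  finally have A: "\<bar>\<mu> (t + x) / \<mu> t - 1\<bar> \<le> C * exp C * l * \<rho> t" unfolding eq by (simp add: algebra_simps)
  have "exp (- C) \<le> exp y" using yC by simp
  then have "\<mu> t * exp (- C) \<le> \<mu> t * exp y" using mt by simp
  then have B: "\<mu> t * exp (- C) \<le> \<mu> (t + x)" using eq mt by (simp add: field_simps)
  show ?thesis using A B by simp
qed



context prob_space
begin

lemma chernoff_lower:
  fixes L :: "nat \<Rightarrow> 'a \<Rightarrow> real" and \<phi> :: "real measure"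
  assumes ind: "indep_vars (\<lambda>_. borel) L {1..}"
    and dist: "\<forall>i\<ge>1. distr M borel (L i) = \<phi>"
    and pos: "AE u in \<phi>. 0 < u"
  shows "\<exists>\<epsilon>>0. AE \<omega> in M. eventually (\<lambda>n. \<epsilon> * real n < partial_sum L n \<omega>) sequentially"
proof -
  have rv[measurable]: "L i \<in> borel_measurable M" if "1 \<le> i" for i
    using ind that unfolding indep_vars_def by auto
  interpret P: prob_space \<phi> using dist prob_space_distr[OF rv[of 1]] by auto
  have phi_eq: "\<phi> = distr M borel (L 1)" using dist by simp
  have sphi[simp, measurable_cong]: "sets \<phi> = sets borel" unfolding phi_eq by simp
  have posM: "AE \<omega> in M. 0 < L i \<omega>" if "1 \<le> i" for i
    using AE_distrD[OF rv[OF that], of "\<lambda>u. 0 < u"] pos dist that by auto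
  define q where "q = (\<integral>u. exp (- u) \<partial>\<phi>)"
  have intphi: "integrable \<phi> (\<lambda>u. exp (- u))"
    by (rule Bochner_Integration.integrable_bound[of _ "\<lambda>_. 1::real"])
       (use pos in \<open>auto elim!: AE_mp\<close>)
  have intM: "integrable M (\<lambda>\<omega>. exp (- L i \<omega>))" if "1 \<le> i" for i
    by (rule Bochner_Integration.integrable_bound[of _ "\<lambda>_. 1::real"])
       (use posM[OF that] that in \<open>auto elim!: AE_mp\<close>)
  have Eq: "expectation (\<lambda>\<omega>. exp (- L i \<omega>)) = q" if "1 \<le> i" for i
    unfolding q_def using dist that by (subst integral_distr[symmetric]) auto
  have q1: "q < 1"
  proof -
    have i1: "integrable \<phi> (\<lambda>u. 1 - exp (- u))" using intphi by auto
    have nn: "AE u in \<phi>. 0 \<le> 1 - exp (- u)" using pos by (auto elim!: AE_mp)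
    have "(\<integral>u. 1 - exp (- u) \<partial>\<phi>) \<noteq> 0"
    proof
      assume "(\<integral>u. 1 - exp (- u) \<partial>\<phi>) = 0"
      then have "AE u in \<phi>. 1 - exp (- u) = 0" using integral_nonneg_eq_0_iff_AE[OF i1 nn] by simp
      with pos have "AE u in \<phi>. False" by eventually_elim auto
      then show False by simp
    qed
    moreover have "0 \<le> (\<integral>u. 1 - exp (- u) \<partial>\<phi>)" using nn by (rule integral_nonneg_AE)
    moreover have "(\<integral>u. 1 - exp (- u) \<partial>\<phi>) = 1 - q" unfolding q_def using intphi by (simp add: P.prob_space)
    ultimately show ?thesis by simp
  qed
  have q0: "0 < q"
  proof -
    have nn: "AE u in \<phi>. 0 \<le> exp (- u)" by simp
    have "q \<noteq> 0"
    proof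
      assume "q = 0"
      then have "AE u in \<phi>. exp (- u) = 0" using integral_nonneg_eq_0_iff_AE[OF intphi nn] q_def by simp
      then have "AE u in \<phi>. False" by simp
      then show False by simp
    qed
    moreover have "0 \<le> q" unfolding q_def using nn by (rule integral_nonneg_AE)
    ultimately show ?thesis by simp
  qed
  define \<epsilon> where "\<epsilon> = ln ((1 + q) / (2 * q))"
  have eps0: "0 < \<epsilon>" unfolding \<epsilon>_def using q0 q1 by simp
  define r where "r = (1 + q) / 2"
  have r1: "r < 1" "0 < r" unfolding r_def using q0 q1 by auto
  have qe: "q * exp \<epsilon> = r" unfolding \<epsilon>_def r_def using q0 q1 by simp
  define A where "A n = {\<omega>\<in>space M. exp (- \<epsilon> * n) \<le> exp (- partial_sum L n \<omega>)}" for n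
  have Ameas[measurable]: "A n \<in> events" for n
  proof -
    have "(\<lambda>\<omega>. partial_sum L n \<omega>) \<in> borel_measurable M"
      unfolding partial_sum_def by (intro borel_measurable_sum) auto
    then show ?thesis unfolding A_def by measurable
  qed
  have PA: "prob (A n) \<le> r ^ n" for n
  proof -
    have indn: "indep_vars (\<lambda>_. borel) (\<lambda>i \<omega>. exp (- L i \<omega>)) {1..n}"
      by (rule indep_vars_compose2[OF indep_vars_subset[OF ind]]) auto
    have prodeq: "exp (- partial_sum L n \<omega>) = (\<Prod>i\<in>{1..n}. exp (- L i \<omega>))" for \<omega>
      unfolding partial_sum_def by (simp add: exp_sum sum_negf[symmetric])
    have intn: "integrable M (\<lambda>\<omega>. \<Prod>i\<in>{1..n}. exp (- L i \<omega>))"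
      using indep_vars_integrable[OF _ indn] intM by auto
    have En: "expectation (\<lambda>\<omega>. exp (- partial_sum L n \<omega>)) = q ^ n"
      unfolding prodeq using indep_vars_lebesgue_integral[OF _ indn] intM Eq by simp
    have "prob (A n) = prob {\<omega>\<in>space M. exp (- \<epsilon> * n) \<le> exp (- partial_sum L n \<omega>)}" unfolding A_def ..
    also have "\<dots> \<le> expectation (\<lambda>\<omega>. exp (- partial_sum L n \<omega>)) / exp (- \<epsilon> * n)"
      by (rule integral_Markov_inequality_measure[where A="space M"]) (use intn prodeq in \<open>auto intro!: prod_nonneg\<close>)
    also have "\<dots> = q ^ n * exp \<epsilon> ^ n" unfolding En by (simp add: exp_minus field_simps exp_of_nat_mult[symmetric] mult.commute)
    also have "\<dots> = r ^ n" using qe by (simp add: power_mult_distrib[symmetric])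
    finally show ?thesis .
  qed
  have summ: "summable (\<lambda>n. measure M (A n))"
    by (rule summable_comparison_test'[OF summable_geometric[of r]]) (use r1 PA in auto)
  have "AE \<omega> in M. eventually (\<lambda>n. \<omega> \<in> space M - A n) sequentially"
    by (rule borel_cantelli_AE1) (auto simp: summ emeasure_eq_measure)
  then have "AE \<omega> in M. eventually (\<lambda>n. \<epsilon> * real n < partial_sum L n \<omega>) sequentially"
    by (auto elim!: AE_mp eventually_mono simp: A_def)
  then show ?thesis using eps0 by blast
qed

end



context prob_space
begin

lemma small_L:
  fixes L :: "nat \<Rightarrow> 'a \<Rightarrow> real" and \<phi> :: "real measure"
  assumes ind: "indep_vars (\<lambda>_. borel) L {1..}"
    and dist: "\<forall>i\<ge>1. distr M borel (L i) = \<phi>"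
    and mgf: "(\<integral>\<^sup>+ u. ennreal (exp u) \<partial>\<phi>) < \<infinity>"
  shows "AE \<omega> in M. eventually (\<lambda>n. L (Suc n) \<omega> \<le> 2 * ln (real (Suc n))) sequentially"
proof -
  have rv[measurable]: "L i \<in> borel_measurable M" if "1 \<le> i" for i
    using ind that unfolding indep_vars_def by auto
  have phi_eq: "\<phi> = distr M borel (L 1)" using dist by simp
  have sphi[simp, measurable_cong]: "sets \<phi> = sets borel" unfolding phi_eq by simp
  define Z where "Z = (\<integral>u. exp u \<partial>\<phi>)"
  have intphi: "integrable \<phi> (\<lambda>u. exp u)"
    by (rule integrableI_nonneg) (use mgf in auto)
  have intM: "integrable M (\<lambda>\<omega>. exp (L (Suc n) \<omega>))" for n
    using intphi dist integrable_distr_eq[OF rv[of "Suc n"], of "\<lambda>u. exp u"] by auto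
  have EZ: "expectation (\<lambda>\<omega>. exp (L (Suc n) \<omega>)) = Z" for n
    unfolding Z_def using dist by (subst integral_distr[symmetric]) auto
  define A where "A n = {\<omega>\<in>space M. real (Suc n) ^ 2 \<le> exp (L (Suc n) \<omega>)}" for n
  have Ameas[measurable]: "A n \<in> events" for n
    unfolding A_def by measurable
  have PA: "prob (A n) \<le> Z * inverse (real (Suc n) ^ 2)" for n
  proof -
    have "prob (A n) \<le> expectation (\<lambda>\<omega>. exp (L (Suc n) \<omega>)) / real (Suc n) ^ 2"
      unfolding A_def by (rule integral_Markov_inequality_measure[where A="space M"]) (use intM in auto)
    then show ?thesis using EZ by (simp add: divide_inverse)
  qed
  have s0: "summable (\<lambda>n. inverse (real n ^ 2))" by (rule inverse_power_summable) simp
  have s1: "summable (\<lambda>n. Z * inverse (real (Suc n) ^ 2))"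
    by (intro summable_mult summable_Suc_iff[of "\<lambda>n. inverse (real n ^ 2)", THEN iffD2, OF s0])
  have summ: "summable (\<lambda>n. measure M (A n))"
    by (rule summable_comparison_test'[OF s1]) (use PA in auto)
  have "AE \<omega> in M. eventually (\<lambda>n. \<omega> \<in> space M - A n) sequentially"
    by (rule borel_cantelli_AE1) (auto simp: summ emeasure_eq_measure)
  moreover have "L (Suc n) \<omega> \<le> 2 * ln (real (Suc n))" if "\<omega> \<in> space M - A n" for \<omega> n
  proof -
    have "exp (L (Suc n) \<omega>) < real (Suc n) ^ 2" using that by (auto simp: A_def)
    then have "ln (exp (L (Suc n) \<omega>)) < ln (real (Suc n) ^ 2)" by (subst ln_less_cancel_iff) auto
    then show ?thesis by (simp add: ln_realpow)
  qed
  ultimately show ?thesis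
    by (elim AE_mp) (rule AE_I2, auto elim!: eventually_mono)
qed

lemma pos_L:
  fixes L :: "nat \<Rightarrow> 'a \<Rightarrow> real" and \<phi> :: "real measure"
  assumes ind: "indep_vars (\<lambda>_. borel) L {1..}"
    and dist: "\<forall>i\<ge>1. distr M borel (L i) = \<phi>"
    and pos: "AE u in \<phi>. 0 < u"
  shows "AE \<omega> in M. \<forall>n. 0 < L (Suc n) \<omega>"
proof -
  have rv[measurable]: "L i \<in> borel_measurable M" if "1 \<le> i" for i
    using ind that unfolding indep_vars_def by auto
  have "AE \<omega> in M. 0 < L (Suc n) \<omega>" for n
  proof -
    have d: "distr M borel (L (Suc n)) = \<phi>" using dist by simp
    show ?thesis using AE_distrD[OF rv[of "Suc n"], of "\<lambda>u. 0 < u"] pos unfolding d by simp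
  qed
  then show ?thesis by (simp add: AE_all_countable)
qed

end



lemma lnsqrt: "(\<lambda>n. ln (real (Suc n)) / sqrt (real n)) \<longlonglongrightarrow> 0"
  by real_asymp

lemma eventually_lnK:
  assumes K: "0 < K" and e: "0 < \<epsilon>"
  shows "eventually (\<lambda>n. 2 * ln (real (Suc n)) * K \<le> sqrt (\<epsilon> * real n)) sequentially"
proof -
  have "0 < sqrt \<epsilon> / (2 * K)" using K e by simp
  from order_tendstoD(2)[OF lnsqrt this]
  have "eventually (\<lambda>n. ln (real (Suc n)) / sqrt (real n) < sqrt \<epsilon> / (2 * K)) sequentially" .
  then show ?thesis using eventually_gt_at_top[of "0::nat"]
  proof eventually_elim
    case (elim n)
    then have h: "ln (real (Suc n)) / sqrt (real n) < sqrt \<epsilon> / (2 * K)" and n: "0 < n" by auto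
    have sn: "0 < sqrt (real n)" using n by simp
    from h have "ln (real (Suc n)) < sqrt \<epsilon> / (2 * K) * sqrt (real n)" using sn by (simp add: divide_less_eq)
    then have "2 * K * ln (real (Suc n)) < sqrt \<epsilon> * sqrt (real n)" using K by (simp add: field_simps)
    then show "2 * ln (real (Suc n)) * K \<le> sqrt (\<epsilon> * real n)" by (simp add: real_sqrt_mult algebra_simps)
  qed
qed

theorem lemma4p1:
  fixes M :: "'a measure" and L :: "nat \<Rightarrow> 'a \<Rightarrow> real" and \<phi> :: "real measure"
    and \<mu> \<rho> :: "real \<Rightarrow> real" and \<alpha> \<beta> \<gamma> \<delta> :: real
  assumes "prob_space M"
    and "prob_space \<phi>" and "sets \<phi> = sets borel"
    and "emeasure \<phi> \<nat> = 1 \<or> emeasure \<phi> {0..} = 1"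
    and "emeasure \<phi> {0} = 0"
    and "\<forall>\<xi>::real. (\<integral>\<^sup>+ u. ennreal (exp (\<xi> * u)) \<partial>\<phi>) < \<infinity>"
    and "prob_space.indep_vars M (\<lambda>_. borel) L {1..}"
    and "\<forall>i\<ge>1. distr M borel (L i) = \<phi>"
    and "(\<alpha> > 0 \<and> \<beta> \<ge> 0 \<and> \<mu> = mu1 \<alpha> \<beta> \<and>
            \<rho> = (\<lambda>t. (ln t) powr (max 1 \<alpha> - 1) / t))
       \<or> (\<gamma> > 0 \<and> 0 < \<delta> \<and> \<delta> \<le> 1/2 \<and> \<mu> = mu2 \<gamma> \<delta> \<and>
            \<rho> = (\<lambda>t. 1 / t powr (1 - \<delta>)))"
  shows "\<exists>c>0. AE \<omega> in M. \<exists>I0::nat. \<forall>f::real \<Rightarrow> real.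
           (\<forall>x. f differentiable (at x)) \<and> mono_on {0..} f \<longrightarrow>
           (\<forall>i\<ge>I0.
              \<bar>Rterm \<mu> f (partial_sum L (i - 1) \<omega>) (L i \<omega>) - (f (L i \<omega>) - f 0)\<bar>
                \<le> c * (f (L i \<omega>) - f 0) * L i \<omega> * \<rho> (partial_sum L (i - 1) \<omega>))"
proof -
  interpret prob_space M by (rule assms(1))
  interpret P: prob_space \<phi> by (rule assms(2))
  have sphi[simp, measurable_cong]: "sets \<phi> = sets borel" by (rule assms(3))
  obtain C K t0 where C: "0 < C" and K: "0 < K" and t0: "1 \<le> t0" and mum: "\<mu> \<in> borel_measurable borel"
    and props: "\<And>t. t0 \<le> t \<Longrightarrow> 0 < \<mu> t \<and> 1/t \<le> \<rho> t \<and> \<rho> t \<le> K / sqrt t \<and>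
     (\<forall>x. 0 \<le> x \<and> x \<le> t \<longrightarrow> 0 < \<mu> (t + x) \<and> \<bar>ln (\<mu> (t + x)) - ln (\<mu> t)\<bar> \<le> C * x * \<rho> t)"
    using detA[OF assms(9)] by blast
  have ge1: "emeasure \<phi> {0..} = 1"
    using assms(4)
  proof
    assume h: "emeasure \<phi> \<nat> = 1"
    have "\<nat> \<subseteq> {0::real..}" by (auto elim!: Nats_cases)
    then have "emeasure \<phi> \<nat> \<le> emeasure \<phi> {0..}" by (intro emeasure_mono) auto
    then show ?thesis using h P.emeasure_le_1[of "{0..}"] by simp
  qed
  have ae1: "AE u in \<phi>. u \<in> {0..}"
    using ge1 by (intro P.AE_prob_1) (simp add: P.emeasure_eq_measure)
  have ae2: "AE u in \<phi>. u \<noteq> 0"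
    by (rule AE_I'[of "{0}"]) (use assms(5) in \<open>auto intro!: null_setsI\<close>)
  have pos: "AE u in \<phi>. 0 < u" using ae1 ae2 by eventually_elim auto
  have mgf: "(\<integral>\<^sup>+ u. ennreal (exp u) \<partial>\<phi>) < \<infinity>" using assms(6)[rule_format, of 1] by simp
  have ind: "indep_vars (\<lambda>_. borel) L {1..}" by (rule assms(7))
  obtain \<epsilon> where eps: "0 < \<epsilon>" and A1: "AE \<omega> in M. eventually (\<lambda>n. \<epsilon> * real n < partial_sum L n \<omega>) sequentially"
    using chernoff_lower[OF ind assms(8) pos] by blast
  have A2: "AE \<omega> in M. eventually (\<lambda>n. L (Suc n) \<omega> \<le> 2 * ln (real (Suc n))) sequentially"
    by (rule small_L[OF ind assms(8) mgf])
  have A3: "AE \<omega> in M. \<forall>n. 0 < L (Suc n) \<omega>"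
    by (rule pos_L[OF ind assms(8) pos])
  have e4: "eventually (\<lambda>n. t0 \<le> \<epsilon> * real n) sequentially"
  proof -
    obtain N :: nat where "t0 / \<epsilon> \<le> N" using real_arch_simple by blast
    then have "\<forall>n\<ge>N. t0 \<le> \<epsilon> * real n" using eps
      by (metis mult.commute of_nat_le_iff order_trans pos_divide_le_eq mult_le_cancel_left_pos)
    then show ?thesis by (auto simp: eventually_sequentially)
  qed
  have e5: "eventually (\<lambda>n. 2 * ln (real (Suc n)) * K \<le> sqrt (\<epsilon> * real n)) sequentially"
    by (rule eventually_lnK[OF K eps])
  define c where "c = C * exp C"
  have c0: "0 < c" unfolding c_def using C by simp
  have main: "\<exists>I0::nat. \<forall>f::real \<Rightarrow> real.
           (\<forall>x. f differentiable (at x)) \<and> mono_on {0..} f \<longrightarrow>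
           (\<forall>i\<ge>I0.
              \<bar>Rterm \<mu> f (partial_sum L (i - 1) \<omega>) (L i \<omega>) - (f (L i \<omega>) - f 0)\<bar>
                \<le> c * (f (L i \<omega>) - f 0) * L i \<omega> * \<rho> (partial_sum L (i - 1) \<omega>))"
    if w1: "eventually (\<lambda>n. \<epsilon> * real n < partial_sum L n \<omega>) sequentially"
      and w2: "eventually (\<lambda>n. L (Suc n) \<omega> \<le> 2 * ln (real (Suc n))) sequentially"
      and w3: "\<forall>n. 0 < L (Suc n) \<omega>" for \<omega>
  proof -
    have "eventually (\<lambda>n. t0 \<le> partial_sum L n \<omega> \<and> L (Suc n) \<omega> * \<rho> (partial_sum L n \<omega>) \<le> 1) sequentially"
      using w1 w2 e4 e5
    proof eventually_elim
      case (elim n)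
      define t where "t = partial_sum L n \<omega>"
      define l where "l = L (Suc n) \<omega>"
      have tt: "t0 \<le> t" using elim unfolding t_def by linarith
      have en: "0 < \<epsilon> * real n" using elim t0 by linarith
      have p: "\<rho> t \<le> K / sqrt t" "1/t \<le> \<rho> t" using props[OF tt] by auto
      have rp: "0 < \<rho> t" using p(2) tt t0 by (smt (verit) divide_pos_pos)
      have sq: "sqrt (\<epsilon> * real n) \<le> sqrt t" using elim unfolding t_def by simp
      have sq0: "0 < sqrt (\<epsilon> * real n)" using en by simp
      have l0: "0 < l" using w3 unfolding l_def by simp
      have "l * \<rho> t \<le> l * (K / sqrt t)" using p l0 by (intro mult_left_mono) auto
      also have "\<dots> \<le> 2 * ln (real (Suc n)) * (K / sqrt t)" using elim K tt t0 unfolding l_def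
        by (intro mult_right_mono) auto
      also have "\<dots> \<le> 2 * ln (real (Suc n)) * (K / sqrt (\<epsilon> * real n))"
        using sq sq0 K by (intro mult_left_mono divide_left_mono) auto
      also have "\<dots> = (2 * ln (real (Suc n)) * K) / sqrt (\<epsilon> * real n)" by simp
      also have "\<dots> \<le> 1" using elim sq0 by simp
      finally show ?case using tt unfolding t_def l_def by simp
    qed
    then obtain N where N: "\<And>n. N \<le> n \<Longrightarrow> t0 \<le> partial_sum L n \<omega> \<and> L (Suc n) \<omega> * \<rho> (partial_sum L n \<omega>) \<le> 1"
      unfolding eventually_sequentially by blast
    show ?thesis
    proof (intro exI[of _ "Suc N"] allI impI)
      fix f :: "real \<Rightarrow> real" and i :: nat
      assume f: "(\<forall>x. f differentiable (at x)) \<and> mono_on {0..} f" and i: "Suc N \<le> i"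
      define n where "n = i - 1"
      have i_eq: "i = Suc n" and nN: "N \<le> n" using i unfolding n_def by auto
      define t where "t = partial_sum L n \<omega>"
      define l where "l = L (Suc n) \<omega>"
      have tt: "t0 \<le> t" and lr: "l * \<rho> t \<le> 1" using N[OF nN] unfolding t_def l_def by auto
      have l0: "0 < l" using w3 unfolding l_def by simp
      have pt: "0 < \<mu> t" "1/t \<le> \<rho> t"
        and H: "\<forall>x. 0 \<le> x \<and> x \<le> t \<longrightarrow> 0 < \<mu> (t + x) \<and> \<bar>ln (\<mu> (t + x)) - ln (\<mu> t)\<bar> \<le> C * x * \<rho> t"
        using props[OF tt] by auto
      have t1: "1 \<le> t" using tt t0 by simp
      have R: "\<And>x. x \<in> {0..l} \<Longrightarrow> \<mu> t * exp (- C) \<le> \<mu> (t + x) \<and> \<bar>\<mu> (t + x) / \<mu> t - 1\<bar> \<le> C * exp C * l * \<rho> t"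
        using ratio[of C t \<mu> \<rho> l, OF C t1 pt(1) pt(2) H l0 lr] by blast
      have "\<bar>Rterm \<mu> f t l - (f l - f 0)\<bar> \<le> (C * exp C * l * \<rho> t) * (f l - f 0)"
        by (rule B[OF f[THEN conjunct1] f[THEN conjunct2] l0 mum pt(1), of "\<mu> t * exp (- C)"])
           (use pt(1) R in auto)
      then show "\<bar>Rterm \<mu> f (partial_sum L (i - 1) \<omega>) (L i \<omega>) - (f (L i \<omega>) - f 0)\<bar>
                \<le> c * (f (L i \<omega>) - f 0) * L i \<omega> * \<rho> (partial_sum L (i - 1) \<omega>)"
        unfolding i_eq t_def l_def c_def by (simp add: algebra_simps)
    qed
  qed
  have "AE \<omega> in M. \<exists>I0::nat. \<forall>f::real \<Rightarrow> real.
           (\<forall>x. f differentiable (at x)) \<and> mono_on {0..} f \<longrightarrow>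
           (\<forall>i\<ge>I0.
              \<bar>Rterm \<mu> f (partial_sum L (i - 1) \<omega>) (L i \<omega>) - (f (L i \<omega>) - f 0)\<bar>
                \<le> c * (f (L i \<omega>) - f 0) * L i \<omega> * \<rho> (partial_sum L (i - 1) \<omega>))"
    using A1 A2 A3 by eventually_elim (rule main)
  then show ?thesis using c0 by blast
qed


end
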